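(* Let $\Gamma$ be a group with a strictly decreasing sequence $\{\Gamma_n\}$ of finite-index normal subgroups with trivial intersection, $Z=\varprojlim\Gamma/\Gamma_n$ with the left translation action, $\pi_n:Z\to\Gamma/\Gamma_n$ the quotient maps, and for $n\ge2$ let $\gamma_n\in\Gamma_{n-1}\setminus\Gamma_n$ and $C_n=\pi_n^{-1}(\gamma_n\Gamma_n)$. Let $s_1,s_2\in\Gamma$ and $z,z'\in Z$ with $s_1z,s_2z\in C_n$ and $s_2z'\in C_m$ ($n,m\ge2$). Then $m=n$ if and only if $s_1z'\in C_n$.
   Context: $Z=\varprojlim\Gamma/\Gamma_n$ is the compact group of compatible sequences in $\prod_n\Gamma/\Gamma_n$, containing $\Gamma$ as a subgroup. (In the paper $\Gamma$ is a finitely generated nonabelian free group.) *)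

theory Defs
  imports "HOL-Algebra.Algebra"
begin

text \<open>Indices start at 1.  An element of the inverse limit
  Z = lim Gamma/Gamma_n is a sequence z indexed by n >= 1 with
  z n a coset of N n, compatible under the natural maps
  Gamma/Gamma_(n+1) -> Gamma/Gamma_n (i.e. z (Suc n) is contained in z n).\<close>

definition invlim :: "('a, 'b) monoid_scheme \<Rightarrow> (nat \<Rightarrow> 'a set) \<Rightarrow> (nat \<Rightarrow> 'a set) set" where
  "invlim G N = {z. z \<in> extensional {1..} \<and> (\<forall>n\<ge>1. z n \<in> rcosets\<^bsub>G\<^esub> (N n))
                    \<and> (\<forall>n\<ge>1. z (Suc n) \<subseteq> z n)}"

definition transl :: "('a, 'b) monoid_scheme \<Rightarrow> 'a \<Rightarrow> (nat \<Rightarrow> 'a set) \<Rightarrow> (nat \<Rightarrow> 'a set)" where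
  "transl G s z = restrict (\<lambda>n. s <#\<^bsub>G\<^esub> z n) {1..}"

definition proj :: "(nat \<Rightarrow> 'a set) \<Rightarrow> nat \<Rightarrow> 'a set" where
  "proj z n = z n"

definition cyl :: "('a, 'b) monoid_scheme \<Rightarrow> (nat \<Rightarrow> 'a set) \<Rightarrow> (nat \<Rightarrow> 'a) \<Rightarrow> nat \<Rightarrow> (nat \<Rightarrow> 'a set) set" where
  "cyl G N \<gamma> n = {z \<in> invlim G N. proj z n = \<gamma> n <#\<^bsub>G\<^esub> N n}"

end

theory Submission
  imports Defs
begin

lemma lcos_rcos_normal:
  fixes G (structure)
  assumes "group G" "H \<lhd> G" "s \<in> carrier G" "y \<in> carrier G"
  shows "s <#\<^bsub>G\<^esub> (H #>\<^bsub>G\<^esub> y) = H #>\<^bsub>G\<^esub> (s \<otimes>\<^bsub>G\<^esub> y)"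
proof -
  interpret group G by fact
  have sg: "subgroup H G" using assms(2) normal_imp_subgroup by blast
  have "s <# (H #> y) = (s <# H) #> y"
    using coset_assoc assms sg subgroup.subset by blast
  also have "s <# H = H #> s" using assms(2) assms(3) normal.coset_eq by fastforce
  also have "(H #> s) #> y = H #> (s \<otimes> y)"
    using coset_mult_assoc assms sg subgroup.subset by blast
  finally show ?thesis .
qed

lemma rcos_cancel:
  fixes G (structure)
  assumes "group G" "subgroup H G" "a \<in> carrier G" "b \<in> carrier G" "y \<in> carrier G"
    and "H #>\<^bsub>G\<^esub> (a \<otimes>\<^bsub>G\<^esub> y) = H #>\<^bsub>G\<^esub> (b \<otimes>\<^bsub>G\<^esub> y)"
    and "y' \<in> carrier G"
  shows "H #>\<^bsub>G\<^esub> (a \<otimes>\<^bsub>G\<^esub> y') = H #>\<^bsub>G\<^esub> (b \<otimes>\<^bsub>G\<^esub> y')"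
proof -
  interpret group G by fact
  have Hs: "H \<subseteq> carrier G" using assms(2) subgroup.subset by blast
  have "H #> a = (H #> (a \<otimes> y)) #> inv y"
    using assms(1-5) Hs by (simp add: coset_mult_assoc m_assoc)
  also have "\<dots> = (H #> (b \<otimes> y)) #> inv y" using assms(6) by simp
  also have "\<dots> = H #> b" using assms(1-5) Hs by (simp add: coset_mult_assoc m_assoc)
  finally have e: "H #> a = H #> b" .
  have "H #> (a \<otimes> y') = (H #> a) #> y'" using assms Hs by (simp add: coset_mult_assoc)
  also have "\<dots> = (H #> b) #> y'" using e by simp
  also have "\<dots> = H #> (b \<otimes> y')" using assms Hs by (simp add: coset_mult_assoc)
  finally show ?thesis .
qed

lemma N_mono:
  assumes "\<And>n. n \<ge> 1 \<Longrightarrow> N (Suc n) \<subset> N n" "1 \<le> i" "i \<le> j"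
  shows "N j \<subseteq> N i"
  using assms(3)
proof (induction j rule: dec_induct)
  case base then show ?case by simp
next
  case (step k) then show ?case using assms(1)[of k] assms(2) by auto
qed

lemma z_mono:
  assumes "z \<in> invlim G N" "1 \<le> i" "i \<le> j"
  shows "z j \<subseteq> z i"
  using assms(3)
proof (induction j rule: dec_induct)
  case base then show ?case by simp
next
  case (step k)
  have "k \<ge> 1" using step assms(2) by simp
  then have "z (Suc k) \<subseteq> z k" using assms(1) unfolding invlim_def by blast
  then show ?case using step by blast
qed

lemma main_aux:
  fixes G (structure)
  fixes N :: "nat \<Rightarrow> 'a set" and \<gamma> :: "nat \<Rightarrow> 'a"
  assumes "group G"
    and normal: "\<And>n. n \<ge> 1 \<Longrightarrow> N n \<lhd> G"
    and fin_index: "\<And>n. n \<ge> 1 \<Longrightarrow> finite (rcosets\<^bsub>G\<^esub> (N n))"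
    and strict_decr: "\<And>n. n \<ge> 1 \<Longrightarrow> N (Suc n) \<subset> N n"
    and trivial_inter: "(\<Inter>n\<in>{1..}. N n) = {\<one>\<^bsub>G\<^esub>}"
    and gamma: "\<And>k. k \<ge> 2 \<Longrightarrow> \<gamma> k \<in> N (k - 1) - N k"
    and "s1 \<in> carrier G" "s2 \<in> carrier G"
    and "z \<in> invlim G N" "z' \<in> invlim G N"
    and "n \<ge> 2" "m \<ge> 2"
    and "transl G s1 z \<in> cyl G N \<gamma> n" "transl G s2 z \<in> cyl G N \<gamma> n"
    and "transl G s2 z' \<in> cyl G N \<gamma> m"
  shows "m = n \<longleftrightarrow> transl G s1 z' \<in> cyl G N \<gamma> n"
proof -
  interpret group G by fact
  have sg: "\<And>k. k \<ge> 1 \<Longrightarrow> subgroup (N k) G" using normal normal_imp_subgroup by blast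
  have Hs: "\<And>k. k \<ge> 1 \<Longrightarrow> N k \<subseteq> carrier G" using sg subgroup.subset by blast
  have rep: "\<exists>y\<in>carrier G. w k = N k #> y" if "w \<in> invlim G N" "k \<ge> 1" for w k
    using that unfolding invlim_def RCOSETS_def by auto
  have tr: "transl G s w k = s <# w k" if "k \<ge> 1" for s w k
    using that unfolding transl_def by simp
  have gcar: "\<gamma> k \<in> carrier G" if "k \<ge> 2" for k
  proof -
    have "k - 1 \<ge> 1" using that by simp
    then show ?thesis using gamma[OF that] Hs[of "k-1"] by blast
  qed
  have gco: "\<gamma> k <# N k = N k #> \<gamma> k" if "k \<ge> 2" for k
    using normal.coset_eq[OF normal[of k]] gcar[OF that] that by auto
  have tinv: "transl G s w \<in> invlim G N" if sw: "s \<in> carrier G" "w \<in> invlim G N" for s w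
    unfolding invlim_def
  proof (intro CollectI conjI allI impI)
    show "transl G s w \<in> extensional {1..}" unfolding transl_def by simp
  next
    fix k :: nat assume k: "k \<ge> 1"
    obtain y where y: "y \<in> carrier G" "w k = N k #> y" using rep[OF sw(2) k] by blast
    have "transl G s w k = N k #> (s \<otimes> y)"
      using tr[OF k] y lcos_rcos_normal[OF assms(1) normal[OF k] sw(1) y(1)] by simp
    then show "transl G s w k \<in> rcosets N k"
      using rcosetsI[OF Hs[OF k] m_closed[OF sw(1) y(1)]] by simp
  next
    fix k :: nat assume k: "k \<ge> 1"
    have "w (Suc k) \<subseteq> w k" using sw(2) k unfolding invlim_def by auto
    then show "transl G s w (Suc k) \<subseteq> transl G s w k"
      using tr k unfolding l_coset_def by auto
  qed
  have n1: "n \<ge> 1" and m1: "m \<ge> 1" using assms by auto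
  have c1: "s1 <# z n = \<gamma> n <# N n" and c2: "s2 <# z n = \<gamma> n <# N n"
    using assms(13,14) tr[OF n1] unfolding cyl_def proj_def by auto
  have c3: "s2 <# z' m = \<gamma> m <# N m"
    using assms(15) tr[OF m1] unfolding cyl_def proj_def by auto
  obtain y where y: "y \<in> carrier G" "z n = N n #> y" using rep[OF assms(9) n1] by blast
  obtain y' where y': "y' \<in> carrier G" "z' n = N n #> y'" using rep[OF assms(10) n1] by blast
  have "N n #> (s1 \<otimes> y) = N n #> (s2 \<otimes> y)"
    using c1 c2 y lcos_rcos_normal[OF assms(1) normal[OF n1]] assms(7,8) by metis
  then have "N n #> (s1 \<otimes> y') = N n #> (s2 \<otimes> y')"
    using rcos_cancel[OF assms(1) sg[OF n1] assms(7,8) y(1)] y'(1) by blast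
  then have key: "s1 <# z' n = s2 <# z' n"
    using y' lcos_rcos_normal[OF assms(1) normal[OF n1]] assms(7,8) by metis
  have T1: "transl G s1 z' \<in> cyl G N \<gamma> n \<longleftrightarrow> s2 <# z' n = \<gamma> n <# N n"
    using tinv[OF assms(7,10)] key tr[OF n1] unfolding cyl_def proj_def by auto
  have contra: False if "i \<ge> 2" "j > i" "N j #> \<gamma> j \<subseteq> N i #> \<gamma> i" for i j
  proof -
    have i1: "i \<ge> 1" and j2: "j \<ge> 2" using that by auto
    have "\<gamma> j \<in> N j #> \<gamma> j" using rcos_self gcar[OF j2] sg j2 by simp
    then have g1: "\<gamma> j \<in> N i #> \<gamma> i" using that(3) by blast
    have "\<gamma> j \<in> N (j - 1)" using gamma[OF j2] by blast
    moreover have "N (j - 1) \<subseteq> N i" using N_mono[where N=N and i=i and j="j-1", OF strict_decr] i1 that by auto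
    ultimately have g2: "\<gamma> j \<in> N i" by blast
    have "N i #> \<gamma> i = N i #> \<gamma> j"
      using repr_independence[OF g1 gcar[OF that(1)] sg[OF i1]] .
    also have "\<dots> = N i" using coset_join2[OF gcar[OF j2] sg[OF i1] g2] .
    finally have "\<gamma> i \<in> N i" using rcos_self[OF gcar[OF that(1)] sg[OF i1]] by simp
    then show False using gamma[OF that(1)] by blast
  qed
  show ?thesis
  proof
    assume "m = n" then show "transl G s1 z' \<in> cyl G N \<gamma> n" using T1 c3 by simp
  next
    assume "transl G s1 z' \<in> cyl G N \<gamma> n"
    then have c4: "s2 <# z' n = \<gamma> n <# N n" using T1 by simp
    show "m = n"
    proof (rule ccontr)
      assume "m \<noteq> n"
      then consider "m < n" | "n < m" by linarith
      then show False
      proof cases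
        case 1
        have "z' n \<subseteq> z' m" using z_mono[OF assms(10) m1] 1 by simp
        then have "s2 <# z' n \<subseteq> s2 <# z' m" unfolding l_coset_def by auto
        then have "N n #> \<gamma> n \<subseteq> N m #> \<gamma> m" using c3 c4 gco assms(11,12) by simp
        then show False using contra[of m n] 1 assms(12) by blast
      next
        case 2
        have "z' m \<subseteq> z' n" using z_mono[OF assms(10) n1] 2 by simp
        then have "s2 <# z' m \<subseteq> s2 <# z' n" unfolding l_coset_def by auto
        then have "N m #> \<gamma> m \<subseteq> N n #> \<gamma> n" using c3 c4 gco assms(11,12) by simp
        then show False using contra[of n m] 2 assms(11) by blast
      qed
    qed
  qed
qed


theorem lemma5p8:
  fixes G :: "('a, 'b) monoid_scheme" and N :: "nat \<Rightarrow> 'a set" and \<gamma> :: "nat \<Rightarrow> 'a"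
  assumes "group G"
    and normal: "\<And>n. n \<ge> 1 \<Longrightarrow> N n \<lhd> G"
    and fin_index: "\<And>n. n \<ge> 1 \<Longrightarrow> finite (rcosets\<^bsub>G\<^esub> (N n))"
    and strict_decr: "\<And>n. n \<ge> 1 \<Longrightarrow> N (Suc n) \<subset> N n"
    and trivial_inter: "(\<Inter>n\<in>{1..}. N n) = {\<one>\<^bsub>G\<^esub>}"
    and gamma: "\<And>k. k \<ge> 2 \<Longrightarrow> \<gamma> k \<in> N (k - 1) - N k"
    and "s1 \<in> carrier G" "s2 \<in> carrier G"
    and "z \<in> invlim G N" "z' \<in> invlim G N"
    and "n \<ge> 2" "m \<ge> 2"
    and "transl G s1 z \<in> cyl G N \<gamma> n" "transl G s2 z \<in> cyl G N \<gamma> n"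
    and "transl G s2 z' \<in> cyl G N \<gamma> m"
  shows "m = n \<longleftrightarrow> transl G s1 z' \<in> cyl G N \<gamma> n"
  using main_aux[OF assms] .

end
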